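(* In the setup below, let $V\subseteq K_2^T(C)$ be the subgroup generated by all elements $R(i;j,k|l;m,n)$ and $T(i,j|k,l|m,n)$. Then $V$ is generated by the elements $R(1;1,j\,|\,2;1,m)$ for $1<j\le N_1$, $1<m\le N_2$; $T(1,1\,|\,k,l\,|\,m,n)$ for $2\le k<m\le N$, $1\le l\le N_k$, $1\le n\le N_m$; $T(1,j\,|\,2,1\,|\,m,n)$ for $2\le j\le N_1$, $3\le m\le N$, $1\le n\le N_m$. (The number of these generators equals $\sum_{1\le i<k\le N}N_iN_k-\sum_{i}N_i+1$.)
   Context: Let $K$ be a field, $N\ge2$, $N_1,\dots,N_N\ge1$. For $1\le i\le N$, $1\le j\le N_i$ let $L_{i,j}=a_ix+b_iy+c_{i,j}$ with $a_i,b_i,c_{i,j}\in K$, $(a_i,b_i)\ne(0,0)$, such that the affine lines $L_{i,j}=0$ are pairwise distinct and $[i,k]:=a_ib_k-a_kb_i\neq0$ for $i\neq k$. For $\lambda\in K^*$ put $f(x,y)=\lambda\prod_{i,j}L_{i,j}-1$; let $C$ be the normalisation of the projective closure of the (irreducible) affine curve $f=0$ and $F$ its function field, with the $L_{i,j}$ viewed in $F^*$. $K_2(F)$ is the abelian group generated by symbols $\{a,b\}$, bimultiplicative and with $\{a,1-a\}=0$; $K_2^T(C)$ is the kernel of the sum of the tame symbols $T_x(\{a,b\})=(-1)^{\mathrm{ord}_x a\,\mathrm{ord}_x b}(a^{\mathrm{ord}_x b}/b^{\mathrm{ord}_x a})(x)$ over all closed points $x$ of $C$. Define $R(i;j,k\,|\,l;m,n)=\{L_{i,j}/L_{i,k},\,L_{l,m}/L_{l,n}\}$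 ($i\ne l$) and $T(i,j\,|\,k,l\,|\,m,n)=\Bigl\{\frac{[i,m]}{[k,m]}\frac{L_{k,l}}{L_{i,j}},\,\frac{[i,k]}{[m,k]}\frac{L_{m,n}}{L_{i,j}}\Bigr\}$ ($i,k,m$ pairwise distinct); these lie in $K_2^T(C)$. *)

theory Defs
  imports "HOL-Library.Poly_Mapping" "HOL-Computational_Algebra.Polynomial_Factorial"
begin

text \<open>K_2(F) is the quotient of the free abelian group on F* x F* by the subgroup
  generated by the bimultiplicativity and Steinberg relations.  A subgroup of
  K_2(F) generated by symbols is represented by its preimage in the free group,
  i.e. the subgroup generated by the symbols together with the relations.\<close>

definition symb :: "'f \<Rightarrow> 'f \<Rightarrow> ('f \<times> 'f) \<Rightarrow>\<^sub>0 int" where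
  "symb u v = Poly_Mapping.single (u, v) 1"

inductive_set gen_subgroup :: "'b::ab_group_add set \<Rightarrow> 'b set" for S where
  gen_zero: "0 \<in> gen_subgroup S"
| gen_base: "x \<in> S \<Longrightarrow> x \<in> gen_subgroup S"
| gen_diff: "x \<in> gen_subgroup S \<Longrightarrow> y \<in> gen_subgroup S \<Longrightarrow> x - y \<in> gen_subgroup S"

definition K2_relators :: "(('f::field \<times> 'f) \<Rightarrow>\<^sub>0 int) set" where
  "K2_relators =
     {symb (u * u') v - symb u v - symb u' v | u u' v. u \<noteq> 0 \<and> u' \<noteq> 0 \<and> v \<noteq> 0}
   \<union> {symb u (v * v') - symb u v - symb u v' | u v v'. u \<noteq> 0 \<and> v \<noteq> 0 \<and> v' \<noteq> 0}
   \<union> {symb u (1 - u) | u. u \<noteq> 0 \<and> u \<noteq> 1}"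

definition K2_span :: "(('f::field \<times> 'f) \<Rightarrow>\<^sub>0 int) set \<Rightarrow> (('f \<times> 'f) \<Rightarrow>\<^sub>0 int) set" where
  "K2_span S = gen_subgroup (S \<union> K2_relators)"

text \<open>F is a field with a field embedding iota of K and elements X, Y (the images of x, y)
  such that F is generated as a field by iota(K), X, Y, X is transcendental over iota(K),
  and f(X,Y) = 0.  Together with irreducibility of f this characterises F up to
  isomorphism as Frac(K[x,y]/(f)), the function field of C.\<close>

definition subfield_closed :: "'f::field set \<Rightarrow> bool" where
  "subfield_closed S \<longleftrightarrow> 0 \<in> S \<and> 1 \<in> S \<and>
     (\<forall>u\<in>S. \<forall>v\<in>S. u + v \<in> S \<and> u * v \<in> S) \<and>
     (\<forall>u\<in>S. - u \<in> S \<and> inverse u \<in> S)"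

definition is_function_field ::
    "('a::field \<Rightarrow> 'f::field) \<Rightarrow> 'f \<Rightarrow> 'f \<Rightarrow> bool" where
  "is_function_field \<iota> X Y \<longleftrightarrow>
     (\<forall>u v. \<iota> (u + v) = \<iota> u + \<iota> v) \<and> (\<forall>u v. \<iota> (u * v) = \<iota> u * \<iota> v) \<and> \<iota> 1 = 1 \<and>
     (\<forall>p. p \<noteq> 0 \<longrightarrow> poly (map_poly \<iota> p) X \<noteq> 0) \<and>
     (\<forall>S. subfield_closed S \<and> range \<iota> \<subseteq> S \<and> X \<in> S \<and> Y \<in> S \<longrightarrow> S = UNIV)"

definition idx :: "nat \<Rightarrow> (nat \<Rightarrow> nat) \<Rightarrow> (nat \<times> nat) set" where
  "idx N Ns = {(i, j). 1 \<le> i \<and> i \<le> N \<and> 1 \<le> j \<and> j \<le> Ns i}"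

definition bracket :: "(nat \<Rightarrow> 'a::field) \<Rightarrow> (nat \<Rightarrow> 'a) \<Rightarrow> nat \<Rightarrow> nat \<Rightarrow> 'a" where
  "bracket a b i k = a i * b k - a k * b i"

text \<open>L_{i,j} = a_i x + b_i y + c_{i,j} as an element of K[x][y] (outer variable y).\<close>
definition Lpoly :: "(nat \<Rightarrow> 'a::field) \<Rightarrow> (nat \<Rightarrow> 'a) \<Rightarrow> (nat \<Rightarrow> nat \<Rightarrow> 'a) \<Rightarrow> nat \<Rightarrow> nat \<Rightarrow> 'a poly poly" where
  "Lpoly a b c i j = [: [: c i j, a i :], [: b i :] :]"

definition fpoly :: "nat \<Rightarrow> (nat \<Rightarrow> nat) \<Rightarrow> 'a::field \<Rightarrow> (nat \<Rightarrow> 'a) \<Rightarrow> (nat \<Rightarrow> 'a) \<Rightarrow> (nat \<Rightarrow> nat \<Rightarrow> 'a) \<Rightarrow> 'a poly poly" where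
  "fpoly N Ns lam a b c = smult [: lam :] (\<Prod>(i, j)\<in>idx N Ns. Lpoly a b c i j) - 1"

definition Lf :: "('a::field \<Rightarrow> 'f::field) \<Rightarrow> (nat \<Rightarrow> 'a) \<Rightarrow> (nat \<Rightarrow> 'a) \<Rightarrow> (nat \<Rightarrow> nat \<Rightarrow> 'a) \<Rightarrow> 'f \<Rightarrow> 'f \<Rightarrow> nat \<Rightarrow> nat \<Rightarrow> 'f" where
  "Lf \<iota> a b c X Y i j = \<iota> (a i) * X + \<iota> (b i) * Y + \<iota> (c i j)"

definition Rel :: "('a::field \<Rightarrow> 'f::field) \<Rightarrow> (nat \<Rightarrow> 'a) \<Rightarrow> (nat \<Rightarrow> 'a) \<Rightarrow> (nat \<Rightarrow> nat \<Rightarrow> 'a) \<Rightarrow> 'f \<Rightarrow> 'f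
    \<Rightarrow> nat \<Rightarrow> nat \<Rightarrow> nat \<Rightarrow> nat \<Rightarrow> nat \<Rightarrow> nat \<Rightarrow> ('f \<times> 'f) \<Rightarrow>\<^sub>0 int" where
  "Rel \<iota> a b c X Y i j k l m n =
     symb (Lf \<iota> a b c X Y i j / Lf \<iota> a b c X Y i k) (Lf \<iota> a b c X Y l m / Lf \<iota> a b c X Y l n)"

definition Tel :: "('a::field \<Rightarrow> 'f::field) \<Rightarrow> (nat \<Rightarrow> 'a) \<Rightarrow> (nat \<Rightarrow> 'a) \<Rightarrow> (nat \<Rightarrow> nat \<Rightarrow> 'a) \<Rightarrow> 'f \<Rightarrow> 'f
    \<Rightarrow> nat \<Rightarrow> nat \<Rightarrow> nat \<Rightarrow> nat \<Rightarrow> nat \<Rightarrow> nat \<Rightarrow> ('f \<times> 'f) \<Rightarrow>\<^sub>0 int" where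
  "Tel \<iota> a b c X Y i j k l m n =
     symb (\<iota> (bracket a b i m / bracket a b k m) * Lf \<iota> a b c X Y k l / Lf \<iota> a b c X Y i j)
          (\<iota> (bracket a b i k / bracket a b m k) * Lf \<iota> a b c X Y m n / Lf \<iota> a b c X Y i j)"

end

theory Submission
  imports Defs
begin


lemma gs_uminus: "x \<in> gen_subgroup S \<Longrightarrow> - x \<in> gen_subgroup S"
  using gen_diff[OF gen_zero, of x S] by simp
lemma gs_add: "x \<in> gen_subgroup S \<Longrightarrow> y \<in> gen_subgroup S \<Longrightarrow> x + y \<in> gen_subgroup S"
  using gen_diff[OF _ gs_uminus, of x S y] by simp
lemma gs_diff: "x \<in> gen_subgroup S \<Longrightarrow> y \<in> gen_subgroup S \<Longrightarrow> x - y \<in> gen_subgroup S"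
  by (rule gen_diff)
lemma gs_mono: assumes "S \<subseteq> T" "x \<in> gen_subgroup S" shows "x \<in> gen_subgroup T"
  using assms(2) by (induction rule: gen_subgroup.induct) (use assms(1) in \<open>auto intro: gen_subgroup.intros\<close>)
lemma gs_least: "x \<in> gen_subgroup S \<Longrightarrow> S \<subseteq> H \<Longrightarrow> 0 \<in> H \<Longrightarrow> (\<And>x y. x \<in> H \<Longrightarrow> y \<in> H \<Longrightarrow> x - y \<in> H) \<Longrightarrow> x \<in> H"
  by (induction rule: gen_subgroup.induct) auto

definition k2rel :: "(('f::field \<times> 'f) \<Rightarrow>\<^sub>0 int) \<Rightarrow> (('f \<times> 'f) \<Rightarrow>\<^sub>0 int) \<Rightarrow> bool" where
  "k2rel x y \<longleftrightarrow> x - y \<in> gen_subgroup K2_relators"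

lemma equivp_k2rel: "equivp k2rel"
proof (rule equivpI)
  show "reflp k2rel" by (auto simp: reflp_def k2rel_def intro: gen_zero)
  show "symp k2rel" unfolding symp_def k2rel_def using gs_uminus by fastforce
  show "transp k2rel" unfolding transp_def k2rel_def using gs_add by fastforce
qed

quotient_type (overloaded) 'f k2 = "('f::field \<times> 'f) \<Rightarrow>\<^sub>0 int" / k2rel
  by (rule equivp_k2rel)

instantiation k2 :: (field) ab_group_add
begin
lift_definition zero_k2 :: "'a k2" is 0 .
lift_definition plus_k2 :: "'a k2 \<Rightarrow> 'a k2 \<Rightarrow> 'a k2" is "(+)"
  unfolding k2rel_def proof -
  fix x1 x2 y1 y2 :: "('a \<times> 'a) \<Rightarrow>\<^sub>0 int"
  assume "x1 - x2 \<in> gen_subgroup K2_relators" "y1 - y2 \<in> gen_subgroup K2_relators"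
  from gs_add[OF this] show "x1 + y1 - (x2 + y2) \<in> gen_subgroup K2_relators" by (simp add: algebra_simps)
qed
lift_definition minus_k2 :: "'a k2 \<Rightarrow> 'a k2 \<Rightarrow> 'a k2" is "(-)"
  unfolding k2rel_def proof -
  fix x1 x2 y1 y2 :: "('a \<times> 'a) \<Rightarrow>\<^sub>0 int"
  assume "x1 - x2 \<in> gen_subgroup K2_relators" "y1 - y2 \<in> gen_subgroup K2_relators"
  from gs_diff[OF this] show "x1 - y1 - (x2 - y2) \<in> gen_subgroup K2_relators" by (simp add: algebra_simps)
qed
lift_definition uminus_k2 :: "'a k2 \<Rightarrow> 'a k2" is "uminus"
  unfolding k2rel_def proof -
  fix x1 x2 :: "('a \<times> 'a) \<Rightarrow>\<^sub>0 int"
  assume "x1 - x2 \<in> gen_subgroup K2_relators"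
  from gs_uminus[OF this] show "- x1 - (- x2) \<in> gen_subgroup K2_relators" by (simp add: algebra_simps)
qed
instance by standard (transfer; simp add: algebra_simps k2rel_def gen_zero)+
end

lift_definition sy :: "'f::field \<Rightarrow> 'f \<Rightarrow> 'f k2" is "symb" .

lemma abs_diff: "abs_k2 (x - y) = abs_k2 x - abs_k2 y"
  by (simp add: minus_k2.abs_eq k2rel_def gen_zero)  

lemma abs_add: "abs_k2 (x + y) = abs_k2 x + abs_k2 y"
  by (simp add: plus_k2.abs_eq k2rel_def gen_zero)

lemma rel_zero: "r \<in> K2_relators \<Longrightarrow> abs_k2 r = 0"
proof -
  assume "r \<in> K2_relators"
  hence "k2rel r 0" by (simp add: k2rel_def gen_base)
  thus ?thesis by (metis k2.abs_eq_iff zero_k2_def)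
qed

lemma sy_mult_left: "u \<noteq> 0 \<Longrightarrow> u' \<noteq> 0 \<Longrightarrow> v \<noteq> 0 \<Longrightarrow> sy (u * u') v = sy u v + sy u' v"
proof -
  assume h: "u \<noteq> 0" "u' \<noteq> 0" "v \<noteq> 0"
  hence "symb (u * u') v - symb u v - symb u' v \<in> K2_relators" unfolding K2_relators_def by blast
  hence "abs_k2 (symb (u * u') v - symb u v - symb u' v) = 0" by (rule rel_zero)
  thus ?thesis by (simp add: abs_diff abs_add sy.abs_eq algebra_simps)
qed
lemma sy_mult_right: "u \<noteq> 0 \<Longrightarrow> v \<noteq> 0 \<Longrightarrow> v' \<noteq> 0 \<Longrightarrow> sy u (v * v') = sy u v + sy u v'"
proof -
  assume h: "u \<noteq> 0" "v \<noteq> 0" "v' \<noteq> 0"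
  hence "symb u (v * v') - symb u v - symb u v' \<in> K2_relators" unfolding K2_relators_def by blast
  hence "abs_k2 (symb u (v * v') - symb u v - symb u v') = 0" by (rule rel_zero)
  thus ?thesis by (simp add: abs_diff abs_add sy.abs_eq algebra_simps)
qed
lemma sy_steinberg: "u \<noteq> 0 \<Longrightarrow> u \<noteq> 1 \<Longrightarrow> sy u (1 - u) = 0"
proof -
  assume h: "u \<noteq> 0" "u \<noteq> 1"
  hence "symb u (1 - u) \<in> K2_relators" unfolding K2_relators_def by blast
  thus ?thesis by (simp add: rel_zero sy.abs_eq)
qed

lemma sy_one_left: "v \<noteq> 0 \<Longrightarrow> sy 1 v = 0"
  using sy_mult_left[of 1 1 v] by simp
lemma sy_one_right: "u \<noteq> 0 \<Longrightarrow> sy u 1 = 0"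
  using sy_mult_right[of u 1 1] by simp
lemma sy_inv_left: "u \<noteq> 0 \<Longrightarrow> v \<noteq> 0 \<Longrightarrow> sy (inverse u) v = - sy u v"
  using sy_mult_left[of u "inverse u" v] sy_one_left[of v]
  by (simp add: eq_neg_iff_add_eq_0 add.commute)
lemma sy_inv_right: "u \<noteq> 0 \<Longrightarrow> v \<noteq> 0 \<Longrightarrow> sy u (inverse v) = - sy u v"
  using sy_mult_right[of u v "inverse v"] sy_one_right[of u]
  by (simp add: eq_neg_iff_add_eq_0 add.commute)
lemma sy_div_left: "u \<noteq> 0 \<Longrightarrow> u' \<noteq> 0 \<Longrightarrow> v \<noteq> 0 \<Longrightarrow> sy (u / u') v = sy u v - sy u' v"
  by (simp add: divide_inverse sy_mult_left sy_inv_left)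
lemma sy_div_right: "u \<noteq> 0 \<Longrightarrow> v \<noteq> 0 \<Longrightarrow> v' \<noteq> 0 \<Longrightarrow> sy u (v / v') = sy u v - sy u v'"
  by (simp add: divide_inverse sy_mult_right sy_inv_right)

lemma sy_neg_self: "u \<noteq> 0 \<Longrightarrow> sy u (- u) = 0"
proof (cases "u = 1")
  case True
  thus ?thesis by (simp add: sy_one_left)
next
  case False
  assume u0: "u \<noteq> 0"
  have "- u = (1 - u) / (1 - inverse u)" using u0 False
    by (simp add: field_simps)
  moreover have "1 - inverse u \<noteq> 0" using u0 False by (simp add: field_simps)
  moreover have "1 - u \<noteq> 0" using False by simp
  ultimately have "sy u (- u) = sy u (1 - u) - sy u (1 - inverse u)"
    using u0 by (simp add: sy_div_right)
  also have "\<dots> = - sy u (1 - inverse u)" using u0 False by (simp add: sy_steinberg)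
  also have "\<dots> = sy (inverse u) (1 - inverse u)" using u0 `1 - inverse u \<noteq> 0` by (simp add: sy_inv_left)
  also have "\<dots> = 0" using u0 False by (intro sy_steinberg) auto
  finally show ?thesis .
qed

lemma sy_antisym: "u \<noteq> 0 \<Longrightarrow> v \<noteq> 0 \<Longrightarrow> sy v u = - sy u v"
proof -
  assume h: "u \<noteq> 0" "v \<noteq> 0"
  have e0: "sy (u*v) ((-u)*v) = 0" using sy_neg_self[of "u*v"] h by simp
  have e1: "sy (u*v) ((-u)*v) = sy u ((-u)*v) + sy v ((-u)*v)" by (rule sy_mult_left) (use h in auto)
  have e2: "sy u ((-u)*v) = sy u (-u) + sy u v" by (rule sy_mult_right) (use h in auto)
  have e3: "sy v ((-u)*v) = sy v (-u) + sy v v" by (rule sy_mult_right) (use h in auto)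
  have e4: "sy v (-u) = sy v (-1) + sy v u" using sy_mult_right[of v "-1" u] h by simp
  have e5: "sy v v = sy v (-1) + sy v (-v)" using sy_mult_right[of v "-1" "-v"] h by simp
  have e6: "sy v (-1) + sy v (-1) = 0" using h sy_mult_right[of v "-1" "-1"] sy_one_right[of v] by simp
  have "0 = sy u v + sy v u + (sy v (-1) + sy v (-1))"
    using e0 e1 e2 e3 e4 e5 h by (simp add: sy_neg_self algebra_simps)
  thus ?thesis using e6 by (simp add: eq_neg_iff_add_eq_0 add.commute)
qed


definition tw :: "'f::field \<Rightarrow> 'f k2" where "tw x = sy x (-1)"

lemma tw_twice: "x \<noteq> 0 \<Longrightarrow> tw x + tw x = 0"
  unfolding tw_def using sy_mult_right[of x "-1" "-1"] sy_one_right[of x] by simp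
lemma tw_neg: "x \<noteq> 0 \<Longrightarrow> - tw x = tw x"
  by (rule minus_unique[OF tw_twice])
lemma tw_twice': "x \<noteq> 0 \<Longrightarrow> tw x + (tw x + z) = z"
  by (simp add: add.assoc[symmetric] tw_twice)
lemma sy_self: "x \<noteq> 0 \<Longrightarrow> sy x x = tw x"
  unfolding tw_def using sy_mult_right[of x "-1" "-x"] sy_neg_self[of x] by simp
lemma sy_m1_left: "x \<noteq> 0 \<Longrightarrow> sy (-1) x = tw x"
  unfolding tw_def using sy_antisym[of x "-1"] tw_neg[of x] unfolding tw_def by simp
lemma sy_neg_right: "x \<noteq> 0 \<Longrightarrow> y \<noteq> 0 \<Longrightarrow> sy x (-y) = tw x + sy x y"
  unfolding tw_def using sy_mult_right[of x "-1" y] by simp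
lemma sy_neg_left: "x \<noteq> 0 \<Longrightarrow> y \<noteq> 0 \<Longrightarrow> sy (-x) y = tw y + sy x y"
  using sy_mult_left[of "-1" x y] sy_m1_left[of y] by simp

lemma tw_mult: "x \<noteq> 0 \<Longrightarrow> y \<noteq> 0 \<Longrightarrow> tw (x * y) = tw x + tw y"
  unfolding tw_def by (rule sy_mult_left) auto
lemma tw_div: "x \<noteq> 0 \<Longrightarrow> y \<noteq> 0 \<Longrightarrow> tw (x / y) = tw x + tw y"
  unfolding tw_def using sy_div_left[of x y "-1"] tw_neg[of y] unfolding tw_def by simp

lemmas sy_expand = sy_mult_left sy_mult_right sy_div_left sy_div_right sy_inv_left sy_inv_right
  sy_neg_right sy_neg_left sy_self sy_m1_left tw_twice tw_twice' tw_neg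

lemma cocycle_abstract:
  fixes p1k p1m p1n pkm pkn pmn :: "'f::field"
  assumes nz: "p1k \<noteq> 0" "p1m \<noteq> 0" "p1n \<noteq> 0" "pkm \<noteq> 0" "pkn \<noteq> 0" "pmn \<noteq> 0"
    and pl: "p1k * pmn - p1m * pkn + p1n * pkm = 0"
  shows "sy (pkn/pmn) (pkm/(-pmn)) = sy (p1m/pkm) (p1k/(-pkm)) + sy (p1n/pmn) (p1m/(-pmn)) + sy (p1k/(-pkn)) (p1n/pkn)"
proof -
  have o0: "sy p1m p1k = - sy p1k p1m" by (rule sy_antisym) (use nz in auto)
  have o1: "sy p1n p1k = - sy p1k p1n" by (rule sy_antisym) (use nz in auto)
  have o2: "sy pkm p1k = - sy p1k pkm" by (rule sy_antisym) (use nz in auto)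
  have o3: "sy pkn p1k = - sy p1k pkn" by (rule sy_antisym) (use nz in auto)
  have o4: "sy pmn p1k = - sy p1k pmn" by (rule sy_antisym) (use nz in auto)
  have o5: "sy p1n p1m = - sy p1m p1n" by (rule sy_antisym) (use nz in auto)
  have o6: "sy pkm p1m = - sy p1m pkm" by (rule sy_antisym) (use nz in auto)
  have o7: "sy pkn p1m = - sy p1m pkn" by (rule sy_antisym) (use nz in auto)
  have o8: "sy pmn p1m = - sy p1m pmn" by (rule sy_antisym) (use nz in auto)
  have o9: "sy pkm p1n = - sy p1n pkm" by (rule sy_antisym) (use nz in auto)
  have o10: "sy pkn p1n = - sy p1n pkn" by (rule sy_antisym) (use nz in auto)
  have o11: "sy pmn p1n = - sy p1n pmn" by (rule sy_antisym) (use nz in auto)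
  have o12: "sy pkn pkm = - sy pkm pkn" by (rule sy_antisym) (use nz in auto)
  have o13: "sy pmn pkm = - sy pkm pmn" by (rule sy_antisym) (use nz in auto)
  have o14: "sy pmn pkn = - sy pkn pmn" by (rule sy_antisym) (use nz in auto)
  note orient = o0 o1 o2 o3 o4 o5 o6 o7 o8 o9 o10 o11 o12 o13 o14
  have u1: "p1k * pmn / (p1m * pkn) \<noteq> 1" using nz pl by (auto simp: field_simps)
  have "sy (p1k * pmn / (p1m * pkn)) (1 - p1k * pmn / (p1m * pkn)) = 0"
    by (rule sy_steinberg) (use nz u1 in auto)
  moreover have "1 - p1k * pmn / (p1m * pkn) = p1n * pkm / (p1m * pkn)" using nz pl by (simp add: field_simps)
  ultimately have st: "sy (p1k * pmn / (p1m * pkn)) (p1n * pkm / (p1m * pkn)) = 0" by simp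
  have "sy (pkn/pmn) (pkm/(-pmn)) - (sy (p1m/pkm) (p1k/(-pkm)) + sy (p1n/pmn) (p1m/(-pmn)) + sy (p1k/(-pkn)) (p1n/pkn))
     + sy (p1k * pmn / (p1m * pkn)) (p1n * pkm / (p1m * pkn)) = 0"
    using nz by (simp add: sy_expand orient tw_mult tw_div)
  then show ?thesis using st by simp
qed


lemma T_abstract:
  fixes li lk lm pik pim pkm :: "'f::field"
  assumes nz: "li \<noteq> 0" "lk \<noteq> 0" "lm \<noteq> 0" "pik \<noteq> 0" "pim \<noteq> 0" "pkm \<noteq> 0"
  shows "sy ((pim/pkm) * lk / li) ((pik/(-pkm)) * lm / li) =
     (sy li lk - sy li pik + sy lk (-pik)) + (sy lk lm - sy lk pkm + sy lm (-pkm))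
   + (sy lm li - sy lm (-pim) + sy li pim) + sy (pim/pkm) (pik/(-pkm))"
proof -
  have o0: "sy lk li = - sy li lk" by (rule sy_antisym) (use nz in auto)
  have o1: "sy lm li = - sy li lm" by (rule sy_antisym) (use nz in auto)
  have o2: "sy pik li = - sy li pik" by (rule sy_antisym) (use nz in auto)
  have o3: "sy pim li = - sy li pim" by (rule sy_antisym) (use nz in auto)
  have o4: "sy pkm li = - sy li pkm" by (rule sy_antisym) (use nz in auto)
  have o5: "sy lm lk = - sy lk lm" by (rule sy_antisym) (use nz in auto)
  have o6: "sy pik lk = - sy lk pik" by (rule sy_antisym) (use nz in auto)
  have o7: "sy pim lk = - sy lk pim" by (rule sy_antisym) (use nz in auto)
  have o8: "sy pkm lk = - sy lk pkm" by (rule sy_antisym) (use nz in auto)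
  have o9: "sy pik lm = - sy lm pik" by (rule sy_antisym) (use nz in auto)
  have o10: "sy pim lm = - sy lm pim" by (rule sy_antisym) (use nz in auto)
  have o11: "sy pkm lm = - sy lm pkm" by (rule sy_antisym) (use nz in auto)
  have o12: "sy pim pik = - sy pik pim" by (rule sy_antisym) (use nz in auto)
  have o13: "sy pkm pik = - sy pik pkm" by (rule sy_antisym) (use nz in auto)
  have o14: "sy pkm pim = - sy pim pkm" by (rule sy_antisym) (use nz in auto)
  note orient = o0 o1 o2 o3 o4 o5 o6 o7 o8 o9 o10 o11 o12 o13 o14
  show ?thesis using nz by (simp add: sy_expand orient tw_mult tw_div)
qed

lemma R_abstract:
  fixes x1 x2 y1 y2 p :: "'f::field"
  assumes nz: "x1 \<noteq> 0" "x2 \<noteq> 0" "y1 \<noteq> 0" "y2 \<noteq> 0" "p \<noteq> 0"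
  shows "sy (x1 / x2) (y1 / y2) =
     (sy x1 y1 - sy x1 p + sy y1 (-p)) - (sy x1 y2 - sy x1 p + sy y2 (-p))
   - (sy x2 y1 - sy x2 p + sy y1 (-p)) + (sy x2 y2 - sy x2 p + sy y2 (-p))"
  using nz by (simp add: sy_expand)

lemma E_abstract:
  fixes x y p :: "'f::field"
  assumes nz: "x \<noteq> 0" "y \<noteq> 0" "p \<noteq> 0"
  shows "sy y x - sy y (-p) + sy x p = - (sy x y - sy x p + sy y (-p))"
proof -
  have "sy y x = - sy x y" by (rule sy_antisym) (use nz in auto)
  thus ?thesis using nz by (simp add: sy_expand)
qed

lemma c_swap_abstract:
  fixes u v :: "'f::field"
  assumes nz: "u \<noteq> 0" "v \<noteq> 0"
  shows "sy v u = - sy u v"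
  using nz by (rule sy_antisym)

lemma c_cyc_abstract:
  fixes pik pim pkm :: "'f::field"
  assumes nz: "pik \<noteq> 0" "pim \<noteq> 0" "pkm \<noteq> 0"
  shows "sy ((-pik)/(-pim)) (pkm/pim) = sy (pim/pkm) (pik/(-pkm))"
proof -
  have o0: "sy pim pik = - sy pik pim" by (rule sy_antisym) (use nz in auto)
  have o1: "sy pkm pik = - sy pik pkm" by (rule sy_antisym) (use nz in auto)
  have o2: "sy pkm pim = - sy pim pkm" by (rule sy_antisym) (use nz in auto)
  note orient = o0 o1 o2
  show ?thesis using nz by (simp add: sy_expand orient tw_mult tw_div)
qed


lemma abs_eq_rel: "abs_k2 x = abs_k2 y \<Longrightarrow> x - y \<in> gen_subgroup K2_relators"
  by (metis k2.abs_eq_iff k2rel_def)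

lemma rel_in_span: "x \<in> gen_subgroup K2_relators \<Longrightarrow> x \<in> K2_span B"
  unfolding K2_span_def by (rule gs_mono[rotated]) auto

lemma lift_back:
  assumes "abs_k2 g \<in> gen_subgroup (abs_k2 ` B)"
  shows "g \<in> K2_span B"
proof -
  have "\<forall>x. abs_k2 x = z \<longrightarrow> x \<in> K2_span B" if "z \<in> gen_subgroup (abs_k2 ` B)" for z
    using that
  proof (induction rule: gen_subgroup.induct)
    case gen_zero
    show ?case
    proof (intro allI impI)
      fix x :: "('a \<times> 'a) \<Rightarrow>\<^sub>0 int" assume "abs_k2 x = 0"
      hence "abs_k2 x = abs_k2 0" by (simp add: zero_k2_def)
      from abs_eq_rel[OF this] show "x \<in> K2_span B" by (simp add: rel_in_span)
    qed
  next
    case (gen_base z)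
    then obtain b where b: "b \<in> B" "z = abs_k2 b" by auto
    show ?case
    proof (intro allI impI)
      fix x assume "abs_k2 x = z"
      hence "x - b \<in> K2_span B" using b by (simp add: abs_eq_rel rel_in_span)
      moreover have "b \<in> K2_span B" unfolding K2_span_def by (rule gen_subgroup.gen_base) (use b in simp)
      ultimately have "(x - b) + b \<in> K2_span B" unfolding K2_span_def by (rule gs_add)
      thus "x \<in> K2_span B" by simp
    qed
  next
    case (gen_diff z1 z2)
    define x1 where "x1 = rep_k2 z1"
    define x2 where "x2 = rep_k2 z2"
    have a1: "abs_k2 x1 = z1" unfolding x1_def by (rule Quotient3_abs_rep[OF Quotient3_k2])
    have a2: "abs_k2 x2 = z2" unfolding x2_def by (rule Quotient3_abs_rep[OF Quotient3_k2])
    have i1: "x1 \<in> K2_span B" using gen_diff.IH(1) a1 by blast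
    have i2: "x2 \<in> K2_span B" using gen_diff.IH(2) a2 by blast
    show ?case
    proof (intro allI impI)
      fix x assume "abs_k2 x = z1 - z2"
      hence "abs_k2 x = abs_k2 (x1 - x2)" using a1 a2 by (simp add: abs_diff)
      hence "x - (x1 - x2) \<in> K2_span B" by (simp add: abs_eq_rel rel_in_span)
      moreover have "x1 - x2 \<in> K2_span B" using i1 i2 unfolding K2_span_def by (rule gs_diff)
      ultimately have "(x - (x1 - x2)) + (x1 - x2) \<in> K2_span B" unfolding K2_span_def by (rule gs_add)
      thus "x \<in> K2_span B" by simp
    qed
  qed
  thus ?thesis using assms by blast
qed

locale lines_setup =
  fixes N :: nat and Ns :: "nat \<Rightarrow> nat" and a b :: "nat \<Rightarrow> 'a::field" and c :: "nat \<Rightarrow> nat \<Rightarrow> 'a"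
    and \<iota> :: "'a \<Rightarrow> 'f::field" and X Y :: 'f
  assumes N2: "N \<ge> 2"
    and Ns1: "\<And>i. 1 \<le> i \<Longrightarrow> i \<le> N \<Longrightarrow> Ns i \<ge> 1"
    and br_nz: "\<And>i k. 1 \<le> i \<Longrightarrow> i \<le> N \<Longrightarrow> 1 \<le> k \<Longrightarrow> k \<le> N \<Longrightarrow> i \<noteq> k \<Longrightarrow> bracket a b i k \<noteq> 0"
    and iadd: "\<And>u v. \<iota> (u + v) = \<iota> u + \<iota> v"
    and imult: "\<And>u v. \<iota> (u * v) = \<iota> u * \<iota> v"
    and ione: "\<iota> 1 = 1"
    and L_nz: "\<And>i j. (i, j) \<in> idx N Ns \<Longrightarrow> Lf \<iota> a b c X Y i j \<noteq> 0"
begin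

lemma izero: "\<iota> 0 = 0" using iadd[of 0 0] by (metis add.right_neutral add_left_cancel)
lemma iminus: "\<iota> (- u) = - \<iota> u"
  using iadd[of u "-u"] izero by (simp add: eq_neg_iff_add_eq_0 add.commute)
lemma idiff: "\<iota> (u - v) = \<iota> u - \<iota> v"
  using iadd[of u "-v"] iminus[of v] by simp
lemma inz: "u \<noteq> 0 \<Longrightarrow> \<iota> u \<noteq> 0"
  using imult[of u "inverse u"] ione by auto
lemma idiv: "\<iota> (u / v) = \<iota> u / \<iota> v"
proof (cases "v = 0")
  case True thus ?thesis by (simp add: izero)
next
  case False
  have "\<iota> (u / v) * \<iota> v = \<iota> u" using imult[of "u/v" v] False by simp
  thus ?thesis using inz[OF False] by (simp add: field_simps)
qed

abbreviation L where "L i j \<equiv> Lf \<iota> a b c X Y i j"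
definition bk where "bk i k = \<iota> (bracket a b i k)"

lemma bk_swap: "bk k i = - bk i k"
proof -
  have "bracket a b k i = - bracket a b i k" by (simp add: bracket_def)
  thus ?thesis by (simp add: bk_def iminus)
qed
lemma bk_nz: "1 \<le> i \<Longrightarrow> i \<le> N \<Longrightarrow> 1 \<le> k \<Longrightarrow> k \<le> N \<Longrightarrow> i \<noteq> k \<Longrightarrow> bk i k \<noteq> 0"
  unfolding bk_def by (rule inz, rule br_nz)

definition dv where "dv i \<longleftrightarrow> 1 \<le> i \<and> i \<le> N"

lemma bk_nz_dv [simp]: "dv i \<Longrightarrow> dv k \<Longrightarrow> i \<noteq> k \<Longrightarrow> bk i k \<noteq> 0"
  unfolding dv_def by (rule bk_nz) auto
lemma bk_nz_idx [simp]: "(i, j) \<in> idx N Ns \<Longrightarrow> (k, l) \<in> idx N Ns \<Longrightarrow> i \<noteq> k \<Longrightarrow> bk i k \<noteq> 0"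
  unfolding idx_def by (rule bk_nz) auto

definition E where "E i j k l = sy (L i j) (L k l) - sy (L i j) (bk i k) + sy (L k l) (bk k i)"
definition c3 where "c3 i k m = sy (bk i m / bk k m) (bk i k / bk m k)"

lemma idxD: "(i, j) \<in> idx N Ns \<Longrightarrow> 1 \<le> i \<and> i \<le> N \<and> 1 \<le> j \<and> j \<le> Ns i"
  by (simp add: idx_def)

lemma T_exp:
  assumes P: "(i,j) \<in> idx N Ns" and Q: "(k,l) \<in> idx N Ns" and R: "(m,n) \<in> idx N Ns"
    and d: "i \<noteq> k" "i \<noteq> m" "k \<noteq> m"
  shows "abs_k2 (Tel \<iota> a b c X Y i j k l m n) = E i j k l + E k l m n + E m n i j + c3 i k m"
proof -
  have nz: "L i j \<noteq> 0" "L k l \<noteq> 0" "L m n \<noteq> 0" "bk i k \<noteq> 0" "bk i m \<noteq> 0" "bk k m \<noteq> 0"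
    using L_nz[OF P] L_nz[OF Q] L_nz[OF R] P Q R d by auto
  have "abs_k2 (Tel \<iota> a b c X Y i j k l m n) =
    sy ((bk i m / bk k m) * L k l / L i j) ((bk i k / (- bk k m)) * L m n / L i j)"
    unfolding Tel_def sy.abs_eq[symmetric] idiv bk_def[symmetric] bk_swap[of m k] ..
  also have "\<dots> = E i j k l + E k l m n + E m n i j + c3 i k m"
    unfolding E_def c3_def bk_swap[of k i] bk_swap[of m k] bk_swap[of m i]
    by (rule T_abstract[OF nz])
  finally show ?thesis .
qed

lemma R_exp:
  assumes "(i,j) \<in> idx N Ns" "(i,k) \<in> idx N Ns" "(l,m) \<in> idx N Ns" "(l,n) \<in> idx N Ns" "i \<noteq> l"
  shows "abs_k2 (Rel \<iota> a b c X Y i j k l m n) = E i j l m - E i j l n - E i k l m + E i k l n"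
proof -
  have nz: "L i j \<noteq> 0" "L i k \<noteq> 0" "L l m \<noteq> 0" "L l n \<noteq> 0" "bk i l \<noteq> 0"
    using assms L_nz by auto
  show ?thesis
    unfolding Rel_def sy.abs_eq[symmetric] E_def bk_swap[of l i]
    by (rule R_abstract[OF nz])
qed

lemma E_anti:
  assumes "(i,j) \<in> idx N Ns" "(k,l) \<in> idx N Ns" "i \<noteq> k"
  shows "E k l i j = - E i j k l"
proof -
  have nz: "L i j \<noteq> 0" "L k l \<noteq> 0" "bk i k \<noteq> 0"
    using assms L_nz by auto
  show ?thesis unfolding E_def bk_swap[of k i] by (rule E_abstract[OF nz])
qed

lemma c3_swap:
  assumes "dv i" "dv k" "dv m" "i \<noteq> k" "i \<noteq> m" "k \<noteq> m"
  shows "c3 i m k = - c3 i k m"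
proof -
  have nz: "bk i k / bk m k \<noteq> 0" "bk i m / bk k m \<noteq> 0"
    using assms by auto
  show ?thesis unfolding c3_def by (rule c_swap_abstract[OF nz(2) nz(1)])
qed

lemma c3_cyc:
  assumes "dv i" "dv k" "dv m" "i \<noteq> k" "i \<noteq> m" "k \<noteq> m"
  shows "c3 k m i = c3 i k m"
proof -
  have nz: "bk i k \<noteq> 0" "bk i m \<noteq> 0" "bk k m \<noteq> 0"
    using assms by auto
  show ?thesis unfolding c3_def bk_swap[of k i] bk_swap[of m i] bk_swap[of m k]
    by (rule c_cyc_abstract[OF nz])
qed

lemma c3_cocycle:
  assumes "dv k" "dv m" "dv n" "k \<noteq> 1" "m \<noteq> 1" "n \<noteq> 1" "k \<noteq> m" "k \<noteq> n" "m \<noteq> n"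
  shows "c3 k m n = c3 1 k m + c3 1 m n + c3 1 n k"
proof -
  have d1: "dv 1" using N2 by (simp add: dv_def)
  have nz: "bk 1 k \<noteq> 0" "bk 1 m \<noteq> 0" "bk 1 n \<noteq> 0" "bk k m \<noteq> 0" "bk k n \<noteq> 0" "bk m n \<noteq> 0"
    using assms d1 by auto
  have "bracket a b 1 k * bracket a b m n - bracket a b 1 m * bracket a b k n + bracket a b 1 n * bracket a b k m = 0"
    unfolding bracket_def by algebra
  hence pl: "bk 1 k * bk m n - bk 1 m * bk k n + bk 1 n * bk k m = 0"
    unfolding bk_def using arg_cong[of _ _ \<iota>] by (metis iadd idiff imult izero)
  show ?thesis unfolding c3_def bk_swap[of n m] bk_swap[of m k] bk_swap[of n k]
    by (rule cocycle_abstract[OF nz pl])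
qed

end


context lines_setup begin

definition Bset where "Bset =
     ({Rel \<iota> a b c X Y 1 1 j 2 1 m | j m. 1 < j \<and> j \<le> Ns 1 \<and> 1 < m \<and> m \<le> Ns 2}
      \<union> {Tel \<iota> a b c X Y 1 1 k l m n | k l m n.
          2 \<le> k \<and> k < m \<and> m \<le> N \<and> 1 \<le> l \<and> l \<le> Ns k \<and> 1 \<le> n \<and> n \<le> Ns m}
      \<union> {Tel \<iota> a b c X Y 1 j 2 1 m n | j m n.
          2 \<le> j \<and> j \<le> Ns 1 \<and> 3 \<le> m \<and> m \<le> N \<and> 1 \<le> n \<and> n \<le> Ns m})"

lemma mem_R: "1 < j \<Longrightarrow> j \<le> Ns 1 \<Longrightarrow> 1 < m \<Longrightarrow> m \<le> Ns 2 \<Longrightarrow> Rel \<iota> a b c X Y 1 1 j 2 1 m \<in> Bset"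
  unfolding Bset_def by blast
lemma mem_T1: "2 \<le> k \<Longrightarrow> k < m \<Longrightarrow> m \<le> N \<Longrightarrow> 1 \<le> l \<Longrightarrow> l \<le> Ns k \<Longrightarrow> 1 \<le> n \<Longrightarrow> n \<le> Ns m
   \<Longrightarrow> Tel \<iota> a b c X Y 1 1 k l m n \<in> Bset"
  unfolding Bset_def by blast
lemma mem_T2: "2 \<le> j \<Longrightarrow> j \<le> Ns 1 \<Longrightarrow> 3 \<le> m \<Longrightarrow> m \<le> N \<Longrightarrow> 1 \<le> n \<Longrightarrow> n \<le> Ns m
   \<Longrightarrow> Tel \<iota> a b c X Y 1 j 2 1 m n \<in> Bset"
  unfolding Bset_def by blast

definition W where "W = gen_subgroup (abs_k2 ` Bset)"

lemma W_base: "x \<in> Bset \<Longrightarrow> abs_k2 x \<in> W"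
  unfolding W_def by (rule gen_base) auto
lemma W_zero: "0 \<in> W" unfolding W_def by (rule gen_zero)
lemma W_diff: "x \<in> W \<Longrightarrow> y \<in> W \<Longrightarrow> x - y \<in> W" unfolding W_def by (rule gen_diff)
lemma W_add: "x \<in> W \<Longrightarrow> y \<in> W \<Longrightarrow> x + y \<in> W" unfolding W_def by (rule gs_add)
lemma W_uminus: "x \<in> W \<Longrightarrow> - x \<in> W" unfolding W_def by (rule gs_uminus)

definition pot where "pot i j = (if i = 1 then (if j = 1 then 0 else E 1 j 2 1 - E 1 1 2 1) else - E 1 1 i j)"
definition kap where "kap i k = (if i = 1 \<or> k = 1 then 0 else c3 1 i k)"

definition A where "A i j k l = E i j k l - pot i j + pot k l + kap i k"

lemma idx_iff: "(i, j) \<in> idx N Ns \<longleftrightarrow> 1 \<le> i \<and> i \<le> N \<and> 1 \<le> j \<and> j \<le> Ns i"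
  by (simp add: idx_def)

lemma A1:
  assumes P: "(1,j) \<in> idx N Ns" and Q: "(k,l) \<in> idx N Ns" and k1: "k \<noteq> 1"
  shows "A 1 j k l \<in> W"
proof -
  have N1: "Ns 1 \<ge> 1" "Ns 2 \<ge> 1" using Ns1 N2 by auto
  have 21: "(2,1) \<in> idx N Ns" "(1,1) \<in> idx N Ns" using N1 N2 by (auto simp: idx_iff)
  show ?thesis
  proof (cases "j = 1")
    case True
    thus ?thesis using k1 by (simp add: A_def pot_def kap_def W_zero)
  next
    case j: False
    show ?thesis
    proof (cases "k = 2")
      case k2: True
      show ?thesis
      proof (cases "l = 1")
        case True
        thus ?thesis using k2 j by (simp add: A_def pot_def kap_def W_zero)
      next
        case l: False
        have "Rel \<iota> a b c X Y 1 1 j 2 1 l \<in> Bset"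
          using j l P Q k2 by (intro mem_R) (auto simp: idx_iff)
        hence "abs_k2 (Rel \<iota> a b c X Y 1 1 j 2 1 l) \<in> W" by (rule W_base)
        moreover have "abs_k2 (Rel \<iota> a b c X Y 1 1 j 2 1 l) = A 1 j k l"
        proof -
          have r: "abs_k2 (Rel \<iota> a b c X Y 1 1 j 2 1 l) = E 1 1 2 1 - E 1 1 2 l - E 1 j 2 1 + E 1 j 2 l"
            by (rule R_exp) (use 21 P Q k2 in auto)
          show ?thesis unfolding r using k2 j by (simp add: A_def pot_def kap_def algebra_simps)
        qed
        ultimately show ?thesis by simp
      qed
    next
      case k2: False
      have k3: "k \<ge> 3" using k1 k2 Q by (auto simp: idx_iff)
      have b1: "Tel \<iota> a b c X Y 1 1 2 1 k l \<in> Bset"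
        using k3 Q N1 by (intro mem_T1) (auto simp: idx_iff)
      have b2: "Tel \<iota> a b c X Y 1 j 2 1 k l \<in> Bset"
        using k3 Q P j by (intro mem_T2) (auto simp: idx_iff)
      have "abs_k2 (Tel \<iota> a b c X Y 1 1 2 1 k l) - abs_k2 (Tel \<iota> a b c X Y 1 j 2 1 k l) \<in> W"
        using W_diff[OF W_base[OF b1] W_base[OF b2]] .
      moreover have "abs_k2 (Tel \<iota> a b c X Y 1 1 2 1 k l) - abs_k2 (Tel \<iota> a b c X Y 1 j 2 1 k l) = A 1 j k l"
      proof -
        have t1: "abs_k2 (Tel \<iota> a b c X Y 1 1 2 1 k l) = E 1 1 2 1 + E 2 1 k l + E k l 1 1 + c3 1 2 k"
          by (rule T_exp) (use 21 Q k3 in auto)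
        have t2: "abs_k2 (Tel \<iota> a b c X Y 1 j 2 1 k l) = E 1 j 2 1 + E 2 1 k l + E k l 1 j + c3 1 2 k"
          by (rule T_exp) (use 21 P Q k3 in auto)
        have e1: "E k l 1 1 = - E 1 1 k l" by (rule E_anti) (use 21 Q k3 in auto)
        have e2: "E k l 1 j = - E 1 j k l" by (rule E_anti) (use P Q k3 in auto)
        show ?thesis unfolding t1 t2 e1 e2 using j k1 by (simp add: A_def pot_def kap_def algebra_simps)
      qed
      ultimately show ?thesis by simp
    qed
  qed
qed

lemma A2:
  assumes P: "(i,j) \<in> idx N Ns" and Q: "(k,l) \<in> idx N Ns" and i1: "i \<noteq> 1" and ik: "i < k"
  shows "A i j k l \<in> W"
proof -
  have 11: "(1,1) \<in> idx N Ns" using Ns1 N2 by (auto simp: idx_iff)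
  have i2: "i \<ge> 2" using P i1 by (auto simp: idx_iff)
  have b: "Tel \<iota> a b c X Y 1 1 i j k l \<in> Bset"
    using P Q i2 ik by (intro mem_T1) (auto simp: idx_iff)
  have "abs_k2 (Tel \<iota> a b c X Y 1 1 i j k l) = A i j k l"
  proof -
    have t: "abs_k2 (Tel \<iota> a b c X Y 1 1 i j k l) = E 1 1 i j + E i j k l + E k l 1 1 + c3 1 i k"
      by (rule T_exp) (use 11 P Q i2 ik in auto)
    have e: "E k l 1 1 = - E 1 1 k l" by (rule E_anti) (use 11 P Q i2 ik in auto)
    show ?thesis unfolding t e using i1 i2 ik by (simp add: A_def pot_def kap_def algebra_simps)
  qed
  thus ?thesis using W_base[OF b] by simp
qed

lemma kap_anti:
  assumes "dv i" "dv k" "i \<noteq> k"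
  shows "kap k i = - kap i k"
proof -
  have "dv 1" using N2 by (simp add: dv_def)
  thus ?thesis using assms c3_swap[of 1 i k] by (auto simp: kap_def)
qed

lemma A_anti:
  assumes P: "(i,j) \<in> idx N Ns" and Q: "(k,l) \<in> idx N Ns" and ik: "i \<noteq> k"
  shows "A k l i j = - A i j k l"
proof -
  have "dv i" "dv k" using P Q by (auto simp: idx_iff dv_def)
  thus ?thesis using E_anti[OF P Q ik] kap_anti[of i k] ik by (simp add: A_def algebra_simps)
qed

lemma A_all:
  assumes P: "(i,j) \<in> idx N Ns" and Q: "(k,l) \<in> idx N Ns" and ik: "i \<noteq> k"
  shows "A i j k l \<in> W"
proof -
  consider "i = 1" | "k = 1" | "i \<noteq> 1" "k \<noteq> 1" "i < k" | "i \<noteq> 1" "k \<noteq> 1" "k < i"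
    using ik by linarith
  thus ?thesis
  proof cases
    case 1 thus ?thesis using A1 P Q ik by auto
  next
    case 2
    hence "A k l i j \<in> W" using A1 P Q ik by auto
    thus ?thesis using A_anti[OF Q P] ik W_uminus by fastforce
  next
    case 3 thus ?thesis using A2 P Q by auto
  next
    case 4
    hence "A k l i j \<in> W" using A2 P Q by auto
    thus ?thesis using A_anti[OF Q P] ik W_uminus by fastforce
  qed
qed

lemma kap_cyc:
  assumes "dv i" "dv k" "dv m" "i \<noteq> k" "i \<noteq> m" "k \<noteq> m"
  shows "kap i k + kap k m + kap m i = c3 i k m"
proof -
  have d1: "dv 1" using N2 by (simp add: dv_def)
  consider "i = 1" | "k = 1" | "m = 1" | "i \<noteq> 1" "k \<noteq> 1" "m \<noteq> 1" by blast
  thus ?thesis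
  proof cases
    case 1 thus ?thesis using assms by (simp add: kap_def)
  next
    case 2 thus ?thesis using assms c3_cyc[of i 1 m] d1 by (simp add: kap_def)
  next
    case 3 thus ?thesis using assms c3_cyc[of 1 i k] d1 by (simp add: kap_def)
  next
    case 4 thus ?thesis using assms c3_cocycle[of i k m] by (simp add: kap_def)
  qed
qed

lemma Tel_W:
  assumes P: "(i,j) \<in> idx N Ns" and Q: "(k,l) \<in> idx N Ns" and R: "(m,n) \<in> idx N Ns"
    and d: "i \<noteq> k" "i \<noteq> m" "k \<noteq> m"
  shows "abs_k2 (Tel \<iota> a b c X Y i j k l m n) \<in> W"
proof -
  have dv: "dv i" "dv k" "dv m" using P Q R by (auto simp: idx_iff dv_def)
  have "A i j k l + A k l m n + A m n i j \<in> W"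
    using A_all[OF P Q d(1)] A_all[OF Q R d(3)] A_all[OF R P] d W_add by auto
  moreover have "A i j k l + A k l m n + A m n i j = abs_k2 (Tel \<iota> a b c X Y i j k l m n)"
    using T_exp[OF P Q R d] kap_cyc[OF dv d] by (simp add: A_def algebra_simps)
  ultimately show ?thesis by simp
qed

lemma Rel_W:
  assumes "(i,j) \<in> idx N Ns" "(i,k) \<in> idx N Ns" "(l,m) \<in> idx N Ns" "(l,n) \<in> idx N Ns" "i \<noteq> l"
  shows "abs_k2 (Rel \<iota> a b c X Y i j k l m n) \<in> W"
proof -
  have "A i j l m - A i j l n - A i k l m + A i k l n \<in> W"
    using W_add[OF W_diff[OF W_diff[OF A_all[OF assms(1) assms(3) assms(5)] A_all[OF assms(1) assms(4) assms(5)]]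
      A_all[OF assms(2) assms(3) assms(5)]] A_all[OF assms(2) assms(4) assms(5)]] .
  moreover have "A i j l m - A i j l n - A i k l m + A i k l n = abs_k2 (Rel \<iota> a b c X Y i j k l m n)"
    using R_exp[OF assms] by (simp add: A_def algebra_simps)
  ultimately show ?thesis by simp
qed

end

theorem proposition3p2:
  fixes N :: nat and Ns :: "nat \<Rightarrow> nat"
    and lam :: "'a::field" and a b :: "nat \<Rightarrow> 'a" and c :: "nat \<Rightarrow> nat \<Rightarrow> 'a"
    and \<iota> :: "'a \<Rightarrow> 'f::field" and X Y :: 'f
  assumes N2: "N \<ge> 2"
    and Ns1: "\<And>i. 1 \<le> i \<Longrightarrow> i \<le> N \<Longrightarrow> Ns i \<ge> 1"
    and ab_nz: "\<And>i. 1 \<le> i \<Longrightarrow> i \<le> N \<Longrightarrow> (a i, b i) \<noteq> (0, 0)"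
    and lines_distinct: "\<And>i j i' j'. (i, j) \<in> idx N Ns \<Longrightarrow> (i', j') \<in> idx N Ns \<Longrightarrow> (i, j) \<noteq> (i', j') \<Longrightarrow>
           \<not> (\<exists>t. t \<noteq> 0 \<and> a i = t * a i' \<and> b i = t * b i' \<and> c i j = t * c i' j')"
    and br_nz: "\<And>i k. 1 \<le> i \<Longrightarrow> i \<le> N \<Longrightarrow> 1 \<le> k \<Longrightarrow> k \<le> N \<Longrightarrow> i \<noteq> k \<Longrightarrow> bracket a b i k \<noteq> 0"
    and lam_nz: "lam \<noteq> 0"
    and irred: "irreducible (fpoly N Ns lam a b c)"
    and FF: "is_function_field \<iota> X Y"
    and curve: "\<iota> lam * (\<Prod>(i, j)\<in>idx N Ns. Lf \<iota> a b c X Y i j) = 1"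
  shows "K2_span
     ({Rel \<iota> a b c X Y i j k l m n | i j k l m n.
          (i, j) \<in> idx N Ns \<and> (i, k) \<in> idx N Ns \<and> (l, m) \<in> idx N Ns \<and> (l, n) \<in> idx N Ns \<and> i \<noteq> l}
      \<union> {Tel \<iota> a b c X Y i j k l m n | i j k l m n.
          (i, j) \<in> idx N Ns \<and> (k, l) \<in> idx N Ns \<and> (m, n) \<in> idx N Ns \<and> i \<noteq> k \<and> i \<noteq> m \<and> k \<noteq> m})
   = K2_span
     ({Rel \<iota> a b c X Y 1 1 j 2 1 m | j m. 1 < j \<and> j \<le> Ns 1 \<and> 1 < m \<and> m \<le> Ns 2}
      \<union> {Tel \<iota> a b c X Y 1 1 k l m n | k l m n.
          2 \<le> k \<and> k < m \<and> m \<le> N \<and> 1 \<le> l \<and> l \<le> Ns k \<and> 1 \<le> n \<and> n \<le> Ns m}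
      \<union> {Tel \<iota> a b c X Y 1 j 2 1 m n | j m n.
          2 \<le> j \<and> j \<le> Ns 1 \<and> 3 \<le> m \<and> m \<le> N \<and> 1 \<le> n \<and> n \<le> Ns m})"
proof -
  have hom: "\<forall>u v. \<iota> (u + v) = \<iota> u + \<iota> v" "\<forall>u v. \<iota> (u * v) = \<iota> u * \<iota> v" "\<iota> 1 = 1"
    using FF unfolding is_function_field_def by auto
  have idx_eq: "idx N Ns = Sigma {1..N} (\<lambda>i. {1..Ns i})" by (auto simp: idx_def)
  have fin: "finite (idx N Ns)" unfolding idx_eq by (rule finite_SigmaI) auto
  have Lnz: "Lf \<iota> a b c X Y i j \<noteq> 0" if "(i, j) \<in> idx N Ns" for i j
  proof
    assume "Lf \<iota> a b c X Y i j = 0"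
    hence "(\<Prod>(i, j)\<in>idx N Ns. Lf \<iota> a b c X Y i j) = 0"
      using fin that by (subst prod_zero_iff) force+
    thus False using curve by simp
  qed
  interpret lines_setup N Ns a b c \<iota> X Y
    by unfold_locales (use N2 Ns1 br_nz hom Lnz in auto)
  let ?G = "{Rel \<iota> a b c X Y i j k l m n | i j k l m n.
          (i, j) \<in> idx N Ns \<and> (i, k) \<in> idx N Ns \<and> (l, m) \<in> idx N Ns \<and> (l, n) \<in> idx N Ns \<and> i \<noteq> l}
      \<union> {Tel \<iota> a b c X Y i j k l m n | i j k l m n.
          (i, j) \<in> idx N Ns \<and> (k, l) \<in> idx N Ns \<and> (m, n) \<in> idx N Ns \<and> i \<noteq> k \<and> i \<noteq> m \<and> k \<noteq> m}"
  have B_eq: "Bset = ({Rel \<iota> a b c X Y 1 1 j 2 1 m | j m. 1 < j \<and> j \<le> Ns 1 \<and> 1 < m \<and> m \<le> Ns 2}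
      \<union> {Tel \<iota> a b c X Y 1 1 k l m n | k l m n.
          2 \<le> k \<and> k < m \<and> m \<le> N \<and> 1 \<le> l \<and> l \<le> Ns k \<and> 1 \<le> n \<and> n \<le> Ns m}
      \<union> {Tel \<iota> a b c X Y 1 j 2 1 m n | j m n.
          2 \<le> j \<and> j \<le> Ns 1 \<and> 3 \<le> m \<and> m \<le> N \<and> 1 \<le> n \<and> n \<le> Ns m})"
    by (rule Bset_def)
  have i11: "(1, 1) \<in> idx N Ns" "(2, 1) \<in> idx N Ns" using N2 Ns1[of 1] Ns1[of 2] by (auto simp: idx_def)
  have BG: "Bset \<subseteq> ?G"
  proof
    fix x assume "x \<in> Bset"
    then consider (r) j m where "x = Rel \<iota> a b c X Y 1 1 j 2 1 m" "1 < j" "j \<le> Ns 1" "1 < m" "m \<le> Ns 2"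
      | (t1) k l m n where "x = Tel \<iota> a b c X Y 1 1 k l m n" "2 \<le> k" "k < m" "m \<le> N" "1 \<le> l" "l \<le> Ns k" "1 \<le> n" "n \<le> Ns m"
      | (t2) j m n where "x = Tel \<iota> a b c X Y 1 j 2 1 m n" "2 \<le> j" "j \<le> Ns 1" "3 \<le> m" "m \<le> N" "1 \<le> n" "n \<le> Ns m"
      unfolding Bset_def by blast
    then show "x \<in> ?G"
    proof cases
      case r
      have "(1, j) \<in> idx N Ns" "(2, m) \<in> idx N Ns" using r N2 by (auto simp: idx_def)
      hence "\<exists>i j' k l m' n. x = Rel \<iota> a b c X Y i j' k l m' n \<and> (i, j') \<in> idx N Ns \<and> (i, k) \<in> idx N Ns \<and> (l, m') \<in> idx N Ns \<and> (l, n) \<in> idx N Ns \<and> i \<noteq> l"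
        using r i11 by (intro exI[of _ 1] exI[of _ 1] exI[of _ j] exI[of _ 2] exI[of _ 1] exI[of _ m]) simp
      thus ?thesis by blast
    next
      case t1
      have "(k, l) \<in> idx N Ns" "(m, n) \<in> idx N Ns" using t1 by (auto simp: idx_def)
      hence "\<exists>i j k' l' m' n'. x = Tel \<iota> a b c X Y i j k' l' m' n' \<and> (i, j) \<in> idx N Ns \<and> (k', l') \<in> idx N Ns \<and> (m', n') \<in> idx N Ns \<and> i \<noteq> k' \<and> i \<noteq> m' \<and> k' \<noteq> m'"
        using t1 i11 by (intro exI[of _ 1] exI[of _ 1] exI[of _ k] exI[of _ l] exI[of _ m] exI[of _ n]) simp
      thus ?thesis by blast
    next
      case t2
      have "(1, j) \<in> idx N Ns" "(m, n) \<in> idx N Ns" using t2 by (auto simp: idx_def)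
      hence "\<exists>i j' k' l' m' n'. x = Tel \<iota> a b c X Y i j' k' l' m' n' \<and> (i, j') \<in> idx N Ns \<and> (k', l') \<in> idx N Ns \<and> (m', n') \<in> idx N Ns \<and> i \<noteq> k' \<and> i \<noteq> m' \<and> k' \<noteq> m'"
        using t2 i11 by (intro exI[of _ 1] exI[of _ j] exI[of _ 2] exI[of _ 1] exI[of _ m] exI[of _ n]) simp
      thus ?thesis by blast
    qed
  qed
  have GB: "?G \<subseteq> K2_span Bset"
  proof
    fix x assume "x \<in> ?G"
    then consider (r) i j k l m n where "x = Rel \<iota> a b c X Y i j k l m n" "(i, j) \<in> idx N Ns" "(i, k) \<in> idx N Ns" "(l, m) \<in> idx N Ns" "(l, n) \<in> idx N Ns" "i \<noteq> l"
      | (t) i j k l m n where "x = Tel \<iota> a b c X Y i j k l m n" "(i, j) \<in> idx N Ns" "(k, l) \<in> idx N Ns" "(m, n) \<in> idx N Ns" "i \<noteq> k" "i \<noteq> m" "k \<noteq> m"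
      by blast
    then show "x \<in> K2_span Bset"
    proof cases
      case r
      thus ?thesis using Rel_W[of i j k l m n] lift_back unfolding W_def by blast
    next
      case t
      thus ?thesis using Tel_W[of i j k l m n] lift_back unfolding W_def by blast
    qed
  qed
  have "K2_span ?G \<subseteq> K2_span Bset"
  proof
    fix x assume "x \<in> K2_span ?G"
    thus "x \<in> K2_span Bset" unfolding K2_span_def[of ?G]
    proof (rule gs_least)
      show "?G \<union> K2_relators \<subseteq> K2_span Bset"
        using GB unfolding K2_span_def by (auto intro: gen_base)
      show "0 \<in> K2_span Bset" unfolding K2_span_def by (rule gen_zero)
      show "x - y \<in> K2_span Bset" if "x \<in> K2_span Bset" "y \<in> K2_span Bset" for x y
        using that unfolding K2_span_def by (rule gen_diff)
    qed
  qed
  moreover have "K2_span Bset \<subseteq> K2_span ?G"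
    unfolding K2_span_def using BG by (auto intro: gs_mono[rotated])
  ultimately have "K2_span ?G = K2_span Bset" by blast
  thus ?thesis unfolding B_eq .
qed

end
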